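(* Let $k\geq 2$. For every unitary $d\times d$ matrix $U$ with entries in $\mathbb{Z}[1/2,\zeta_{2^k}]$, write $U=A+B\zeta_{2^k}$ where $A,B$ are (uniquely determined) $d\times d$ matrices with entries in $\mathbb{Z}[1/2,\zeta_{2^{k-1}}]$, and set $\phi_k(U)=A\otimes I_2+B\otimes\Lambda_k$. Then $\phi_k$ is a well-defined function from the set of unitary matrices over $\mathbb{Z}[1/2,\zeta_{2^k}]$ to the set of unitary matrices over $\mathbb{Z}[1/2,\zeta_{2^{k-1}}]$, $\phi_k(U)$ has dimension $2d$, and for every $\ket{u}\in\mathbb{C}^d$, $$\phi_k(U)(\ket{u}\otimes\ket{\lambda_k})=(U\ket{u})\otimes\ket{\lambda_k}.$$ That is, $(\phi_k,\ket{\lambda_k})$ is a 2-dimensional catalytic embedding of the unitaries over $\mathbb{Z}[1/2,\zeta_{2^k}]$ into the unitaries over $\mathbb{Z}[1/2,\zeta_{2^{k-1}}]$.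
   Context: $\zeta_n=e^{2\pi i/n}$; $\mathbb{Z}[1/2,\zeta_n]$ is the smallest subring of $\mathbb{C}$ containing $1/2$ and $\zeta_n$. $\Lambda_k=\begin{bmatrix}0&1\\ \zeta_{2^{k-1}}&0\end{bmatrix}$ and $\ket{\lambda_k}=\frac{1}{\sqrt2}\begin{bmatrix}1\\ \zeta_{2^k}\end{bmatrix}$. For collections of unitaries $\mathcal{U},\mathcal{V}$, an $\ell$-dimensional catalytic embedding of $\mathcal{U}$ into $\mathcal{V}$ is a pair $(\phi,\ket{\lambda})$ with $\phi:\mathcal{U}\to\mathcal{V}$ and $\ket{\lambda}\in\mathbb{C}^\ell$ a state, such that whenever $U\in\mathcal{U}$ has dimension $d$, $\phi(U)$ has dimension $d\ell$ and $\phi(U)(\ket{u}\otimes\ket{\lambda})=(U\ket{u})\otimes\ket{\lambda}$ for all $\ket{u}\in\mathbb{C}^d$. *)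

theory Defs
  imports Complex_Main "Jordan_Normal_Form.Matrix"
begin

definition zeta :: "nat \<Rightarrow> complex" where
  "zeta n = cis (2 * pi / real n)"

inductive_set Zhalf_zeta :: "nat \<Rightarrow> complex set" for n :: nat where
  one: "1 \<in> Zhalf_zeta n"
| half: "1/2 \<in> Zhalf_zeta n"
| zeta: "zeta n \<in> Zhalf_zeta n"
| add: "x \<in> Zhalf_zeta n \<Longrightarrow> y \<in> Zhalf_zeta n \<Longrightarrow> x + y \<in> Zhalf_zeta n"
| neg: "x \<in> Zhalf_zeta n \<Longrightarrow> - x \<in> Zhalf_zeta n"
| mult: "x \<in> Zhalf_zeta n \<Longrightarrow> y \<in> Zhalf_zeta n \<Longrightarrow> x * y \<in> Zhalf_zeta n"

definition adjoint :: "complex mat \<Rightarrow> complex mat" where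
  "adjoint U = mat (dim_col U) (dim_row U) (\<lambda>(i, j). cnj (U $$ (j, i)))"

definition unitary_mat :: "complex mat \<Rightarrow> bool" where
  "unitary_mat U \<longleftrightarrow> square_mat U \<and>
     U * adjoint U = 1\<^sub>m (dim_row U) \<and> adjoint U * U = 1\<^sub>m (dim_row U)"

definition unitaries_over :: "complex set \<Rightarrow> complex mat set" where
  "unitaries_over R = {U. unitary_mat U \<and>
     (\<forall>i < dim_row U. \<forall>j < dim_col U. U $$ (i, j) \<in> R)}"

definition entries_in :: "complex set \<Rightarrow> complex mat \<Rightarrow> bool" where
  "entries_in R A \<longleftrightarrow> (\<forall>i < dim_row A. \<forall>j < dim_col A. A $$ (i, j) \<in> R)"

definition kron_mat :: "complex mat \<Rightarrow> complex mat \<Rightarrow> complex mat" where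
  "kron_mat A B = mat (dim_row A * dim_row B) (dim_col A * dim_col B)
     (\<lambda>(i, j). A $$ (i div dim_row B, j div dim_col B) * B $$ (i mod dim_row B, j mod dim_col B))"

definition kron_vec :: "complex vec \<Rightarrow> complex vec \<Rightarrow> complex vec" where
  "kron_vec u v = vec (dim_vec u * dim_vec v)
     (\<lambda>i. u $ (i div dim_vec v) * v $ (i mod dim_vec v))"

definition Lambda :: "nat \<Rightarrow> complex mat" where
  "Lambda k = mat_of_rows_list 2 [[0, 1], [zeta (2 ^ (k - 1)), 0]]"

definition lambda_state :: "nat \<Rightarrow> complex vec" where
  "lambda_state k = vec_of_list [1 / complex_of_real (sqrt 2), zeta (2 ^ k) / complex_of_real (sqrt 2)]"

definition is_decomp :: "nat \<Rightarrow> complex mat \<Rightarrow> complex mat \<times> complex mat \<Rightarrow> bool" where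
  "is_decomp k U AB \<longleftrightarrow>
     fst AB \<in> carrier_mat (dim_row U) (dim_col U) \<and>
     snd AB \<in> carrier_mat (dim_row U) (dim_col U) \<and>
     entries_in (Zhalf_zeta (2 ^ (k - 1))) (fst AB) \<and>
     entries_in (Zhalf_zeta (2 ^ (k - 1))) (snd AB) \<and>
     U = fst AB + zeta (2 ^ k) \<cdot>\<^sub>m snd AB"

definition phi :: "nat \<Rightarrow> complex mat \<Rightarrow> complex mat" where
  "phi k U = (let AB = (THE AB. is_decomp k U AB) in
     kron_mat (fst AB) (1\<^sub>m 2) + kron_mat (snd AB) (Lambda k))"

definition catalytic_embedding ::
  "complex mat set \<Rightarrow> complex mat set \<Rightarrow> nat \<Rightarrow> (complex mat \<Rightarrow> complex mat) \<Rightarrow> complex vec \<Rightarrow> bool" where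
  "catalytic_embedding \<U> \<V> l f lam \<longleftrightarrow>
     lam \<in> carrier_vec l \<and> (\<Sum>i<l. (cmod (lam $ i))\<^sup>2) = 1 \<and>
     (\<forall>U \<in> \<U>. f U \<in> \<V> \<and>
        (\<forall>d. U \<in> carrier_mat d d \<longrightarrow>
           f U \<in> carrier_mat (d * l) (d * l) \<and>
           (\<forall>u \<in> carrier_vec d. f U *\<^sub>v kron_vec u lam = kron_vec (U *\<^sub>v u) lam)))"

end

theory Submission
  imports Defs "HOL-Computational_Algebra.Polynomial_Factorial" "Jordan_Normal_Form.Determinant"
begin


definition ev :: "int poly \<Rightarrow> complex \<Rightarrow> complex" where
  "ev p x = poly (map_poly of_int p) x"

lemma ev_pCons: "ev (pCons a p) x = of_int a + x * ev p x"
  by (simp add: ev_def map_poly_pCons)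

lemma ev_0[simp]: "ev 0 x = 0" by (simp add: ev_def)
lemma ev_const[simp]: "ev [:a:] x = of_int a" by (simp add: ev_def map_poly_pCons)
lemma ev_1[simp]: "ev 1 x = 1" by (simp add: ev_def)

lemma ev_add[simp]: "ev (p + q) x = ev p x + ev q x"
proof -
  have "map_poly (of_int :: int \<Rightarrow> complex) (p + q) = map_poly of_int p + map_poly of_int q"
    by (intro poly_eqI) (simp add: coeff_map_poly)
  thus ?thesis by (simp add: ev_def)
qed

lemma ev_uminus[simp]: "ev (- p) x = - ev p x"
proof -
  have "map_poly (of_int :: int \<Rightarrow> complex) (- p) = - map_poly of_int p"
    by (intro poly_eqI) (simp add: coeff_map_poly)
  thus ?thesis by (simp add: ev_def)
qed

lemma ev_smult[simp]: "ev (smult a p) x = of_int a * ev p x"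
  by (simp add: ev_def map_poly_smult)

lemma ev_mult[simp]: "ev (p * q) x = ev p x * ev q x"
proof (induction p)
  case 0 then show ?case by simp
next
  case (pCons a p)
  have "ev (pCons a p * q) x = ev (smult a q + pCons 0 (p * q)) x" by simp
  also have "\<dots> = of_int a * ev q x + x * (ev p x * ev q x)"
    using pCons by (simp add: ev_pCons)
  also have "\<dots> = ev (pCons a p) x * ev q x" by (simp add: ev_pCons algebra_simps)
  finally show ?case .
qed

lemma ev_pcompose[simp]: "ev (p \<circ>\<^sub>p q) x = ev p (ev q x)"
proof (induction p)
  case 0 then show ?case by simp
next
  case (pCons a p)
  then show ?case by (simp add: pcompose_pCons ev_pCons)
qed

lemma ev_monom: "ev (monom a n) x = of_int a * x ^ n"
  by (simp add: ev_def map_poly_monom poly_monom)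

lemma ev_X: "ev [:0,1:] x = x" by (simp add: ev_pCons)

lemma ev_power[simp]: "ev (p ^ n) x = ev p x ^ n"
  by (induction n) auto

lemma eis_aux:
  fixes g q r :: "int poly"
  assumes g: "g = q * r" and dq: "degree q \<ge> 1" and dr: "degree r \<ge> 1"
    and q0: "even (coeff q 0)" and r0: "odd (coeff r 0)"
    and ev: "\<forall>i<degree g. even (coeff g i)" and lc: "odd (lead_coeff g)"
  shows False
proof -
  have nz: "q \<noteq> 0" "r \<noteq> 0" using dq dr by auto
  have dg: "degree g = degree q + degree r" using g nz by (simp add: degree_mult_eq)
  have "\<forall>i. i \<le> degree q \<longrightarrow> even (coeff q i)"
  proof (intro allI)
    fix i show "i \<le> degree q \<longrightarrow> even (coeff q i)"
    proof (induction i rule: less_induct)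
      case (less i)
      show ?case
      proof
        assume iq: "i \<le> degree q"
        have "i < degree g" using iq dg dr by simp
        hence e: "even (coeff g i)" using ev by simp
        have "coeff g i = (\<Sum>s\<le>i. coeff q s * coeff r (i - s))" by (simp add: g coeff_mult)
        also have "\<dots> = (\<Sum>s<i. coeff q s * coeff r (i - s)) + coeff q i * coeff r 0"
          by (simp add: lessThan_Suc_atMost[symmetric])
        finally have eq: "coeff g i = (\<Sum>s<i. coeff q s * coeff r (i - s)) + coeff q i * coeff r 0" .
        have "even (\<Sum>s<i. coeff q s * coeff r (i - s))"
          using less iq by (intro dvd_sum) auto
        with e eq have "even (coeff q i * coeff r 0)" by (metis dvd_add_right_iff)
        with r0 show "even (coeff q i)" by simp
      qed
    qed
  qed
  hence "even (lead_coeff q)" by simp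
  moreover have "lead_coeff g = lead_coeff q * lead_coeff r" by (simp add: g lead_coeff_mult)
  ultimately show False using lc by simp
qed

lemma eisenstein2:
  fixes g q r :: "int poly"
  assumes g: "g = q * r" and dq: "degree q \<ge> 1" and dr: "degree r \<ge> 1"
    and g0: "coeff g 0 = 2"
    and ev: "\<forall>i<degree g. even (coeff g i)" and lc: "odd (lead_coeff g)"
  shows False
proof -
  have prod: "coeff q 0 * coeff r 0 = 2" using g g0 by (simp add: coeff_mult_0)
  hence "even (coeff q 0 * coeff r 0)" by simp
  hence "even (coeff q 0) \<or> even (coeff r 0)" by simp
  moreover have "\<not> (even (coeff q 0) \<and> even (coeff r 0))"
  proof
    assume "even (coeff q 0) \<and> even (coeff r 0)"
    then obtain a b where "coeff q 0 = 2 * a" "coeff r 0 = 2 * b" by blast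
    with prod have "4 * (a * b) = 2" by (simp add: algebra_simps)
    thus False by presburger
  qed
  ultimately consider "even (coeff q 0)" "odd (coeff r 0)" | "even (coeff r 0)" "odd (coeff q 0)"
    by blast
  then show False
  proof cases
    case 1 then show False using eis_aux[OF g dq dr _ _ ev lc] by blast
  next
    case 2 
    have g': "g = r * q" using g by (simp add: mult.commute)
    show False using eis_aux[OF g' dr dq _ _ ev lc] 2 by blast
  qed
qed

lemma binom_shape:
  "\<exists>e :: int poly. [:1,1:] ^ (2 ^ m) = monom 1 (2 ^ m) + 1 + 2 * e \<and> coeff e 0 = 0 \<and> degree e < 2 ^ m"
proof (induction m)
  case 0
  show ?case by (intro exI[of _ 0]) (simp add: monom_Suc monom_0 one_pCons)
next
  case (Suc m)
  then obtain e :: "int poly" where e: "[:1,1:] ^ (2 ^ m) = monom 1 (2 ^ m) + 1 + 2 * e"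
    and e0: "coeff e 0 = 0" and de: "degree e < 2 ^ m" by blast
  define M :: nat where "M = 2 ^ m"
  have M1: "M \<ge> 1" by (simp add: M_def)
  define X :: "int poly" where "X = monom 1 M"
  define e' where "e' = X + 2 * (e * (X + 1)) + 2 * (e * e)"
  have XX: "X * X = monom 1 (2 ^ Suc m)" by (simp add: X_def mult_monom M_def mult_2)
  have "([:1,1:] :: int poly) ^ (2 ^ Suc m) = ([:1,1:] ^ (2 ^ m)) ^ 2"
    by (simp add: power_mult[symmetric] mult.commute)
  also have "\<dots> = (X + 1 + 2 * e) ^ 2" by (simp add: e M_def X_def)
  also have "\<dots> = X * X + 1 + 2 * e'"
    by (simp add: e'_def power2_eq_square algebra_simps)
  finally have eq: "[:1,1:] ^ (2 ^ Suc m) = monom 1 (2 ^ Suc m) + 1 + 2 * e'"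
    by (simp add: XX)
  have "coeff e' 0 = 0" using M1 e0 by (simp add: e'_def X_def coeff_mult_0 numeral_mult_conv_smult)
  moreover have "degree e' < 2 ^ Suc m"
  proof -
    have d1: "degree X < 2 * M" using M1 by (simp add: degree_monom_eq X_def)
    have dA: "degree (X + 1) \<le> M"
      by (rule degree_add_le) (auto simp: degree_monom_eq X_def)
    have d2: "degree (2 * (e * (X + 1))) < 2 * M"
    proof -
      have "degree (2 * (e * (X + 1))) \<le> degree e + degree (X + 1)"
        unfolding numeral_mult_conv_smult by (rule order_trans[OF degree_smult_le degree_mult_le])
      thus ?thesis using dA de M_def by linarith
    qed
    have d3: "degree (2 * (e * e)) < 2 * M"
    proof -
      have "degree (2 * (e * e)) \<le> degree e + degree e"
        unfolding numeral_mult_conv_smult by (rule order_trans[OF degree_smult_le degree_mult_le])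
      thus ?thesis using de M_def by linarith
    qed
    have "degree e' < 2 * M" unfolding e'_def
      by (intro degree_add_less d1 d2 d3)
    thus ?thesis by (simp add: M_def)
  qed
  ultimately show ?case using eq by blast
qed



lemma g_props:
  fixes m :: nat
  defines "g \<equiv> [:1,1:] ^ (2 ^ m) + (1 :: int poly)"
  shows "degree g = 2 ^ m" "coeff g 0 = 2" "\<forall>i<2 ^ m. even (coeff g i)" "coeff g (2 ^ m) = 1"
proof -
  define c2 :: "nat \<Rightarrow> int" where "c2 i = (if i = 0 then 2 else 0)" for i
  obtain e :: "int poly" where e: "[:1,1:] ^ (2 ^ m) = monom 1 (2 ^ m) + 1 + 2 * e"
    and e0: "coeff e 0 = 0" and de: "degree e < 2 ^ m" using binom_shape by blast
  have gc: "coeff g i = coeff (monom 1 (2^m)) i + c2 i + 2 * coeff e i" for i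
  proof -
    have t: "(2::int poly) = [:2:]" using of_int_poly[of "2::int", where 'a=int] by simp
    have "coeff (2::int poly) i = c2 i" by (subst t) (simp add: c2_def coeff_pCons split: nat.split)
    thus ?thesis by (simp add: g_def e numeral_mult_conv_smult coeff_1 c2_def)
  qed
  show "degree g = 2 ^ m" unfolding g_def
    by (subst degree_add_eq_left) (auto simp: degree_linear_power)
  show "coeff g 0 = 2" by (simp add: gc c2_def e0)
  show "\<forall>i<2 ^ m. even (coeff g i)" by (auto simp: gc c2_def coeff_monom)
  show "coeff g (2 ^ m) = 1" using de by (simp add: gc c2_def coeff_eq_0)
qed

lemma g_irred:
  fixes m :: nat
  defines "g \<equiv> [:1,1:] ^ (2 ^ m) + (1 :: int poly)"
  shows "irreducible g"
proof (rule irreducibleI)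
  note gp = g_props[of m, folded g_def]
  show "g \<noteq> 0" using gp(4) by auto
  show "\<not> is_unit g"
  proof
    assume "is_unit g"
    then obtain c where "g = [:c:]" by (auto simp: is_unit_poly_iff)
    hence "degree g = 0" by simp
    with gp(1) show False by simp
  qed
  fix q r assume qr: "g = q * r"
  have const_unit: "is_unit a" if "degree a = 0" "g = a * b" for a b :: "int poly"
  proof -
    from that(1) have a: "a = [:coeff a 0:]" by (metis degree_eq_zeroE coeff_pCons_0)
    have "g = smult (coeff a 0) b" using that(2) a by (metis mult_pCons_left mult_zero_left add_0_right smult_0_right pCons_0_0)
    hence "coeff g (2^m) = coeff a 0 * coeff b (2^m)" by simp
    hence "coeff a 0 dvd 1" using gp(4) by (metis dvd_triv_left)
    thus ?thesis by (subst a) (simp add: is_unit_const_poly_iff)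
  qed
  show "is_unit q \<or> is_unit r"
  proof (cases "degree q = 0 \<or> degree r = 0")
    case True
    then show ?thesis using const_unit qr by (metis mult.commute)
  next
    case False
    hence "degree q \<ge> 1" "degree r \<ge> 1" by auto
    moreover have "\<forall>i<degree g. even (coeff g i)" using gp by simp
    moreover have "odd (lead_coeff g)" using gp by simp
    ultimately have False using eisenstein2[OF qr _ _ gp(2)] by blast
    thus ?thesis ..
  qed
qed

lemma K_eta:
  fixes m :: nat and \<eta> :: complex and p :: "int poly"
  defines "g \<equiv> [:1,1:] ^ (2 ^ m) + (1 :: int poly)"
  assumes root: "ev g \<eta> = 0" and dp: "degree p < 2 ^ m" and pr: "ev p \<eta> = 0"
  shows "p = 0"
proof (rule ccontr)
  assume "p \<noteq> 0"
  let ?P = "\<lambda>p. p \<noteq> 0 \<and> degree p < 2 ^ m \<and> ev p \<eta> = 0"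
  have "?P p" using \<open>p \<noteq> 0\<close> dp pr by simp
  then obtain p0 where P0: "?P p0" and minp: "\<And>y. ?P y \<Longrightarrow> degree p0 \<le> degree y"
    using ex_has_least_nat[of ?P p degree] by blast
  note gp = g_props[of m, folded g_def]
  have prime: "prime_elem g" using g_irred[of m] irreducible_imp_prime_poly unfolding g_def by blast
  obtain q r where qr: "pseudo_divmod g p0 = (q, r)" by (cases "pseudo_divmod g p0")
  define c where "c = lead_coeff p0 ^ (Suc (degree g) - degree p0)"
  have eq: "smult c g = p0 * q + r" using pseudo_divmod(1)[OF _ qr] P0 by (simp add: c_def)
  have rdeg: "r = 0 \<or> degree r < degree p0" using pseudo_divmod(2)[OF _ qr] P0 by simp
  have c0: "c \<noteq> 0" using P0 by (simp add: c_def)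
  have "ev (smult c g) \<eta> = 0" using root by simp
  hence "ev r \<eta> = 0" using eq P0 by simp
  have r0: "r = 0"
  proof (rule ccontr)
    assume "r \<noteq> 0"
    with rdeg have "degree r < degree p0" by simp
    moreover have "?P r" using \<open>r \<noteq> 0\<close> \<open>ev r \<eta> = 0\<close> calculation P0 by simp
    ultimately show False using minp by fastforce
  qed
  hence eq2: "[:c:] * g = p0 * q" using eq by simp
  hence "g dvd p0 * q" by (metis dvd_triv_right)
  hence "g dvd p0 \<or> g dvd q" using prime prime_elem_dvd_mult_iff by blast
  moreover have "\<not> g dvd p0"
  proof
    assume "g dvd p0"
    hence "degree g \<le> degree p0" using P0 by (simp add: dvd_imp_degree_le)
    thus False using P0 gp(1) by simp
  qed
  ultimately obtain q' where q': "q = g * q'" by (auto elim: dvdE)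
  have gnz: "g \<noteq> 0" using gp(4) by auto
  have "[:c:] * g = (p0 * q') * g" using eq2 q' by (simp add: algebra_simps)
  hence cq: "[:c:] = p0 * q'" using gnz by (metis mult_cancel_right)
  hence "q' \<noteq> 0" using c0 by auto
  hence "degree (p0 * q') = degree p0 + degree q'" using P0 by (simp add: degree_mult_eq)
  moreover have "degree (p0 * q') = 0" using cq[symmetric] by simp
  ultimately have "degree p0 = 0" by linarith
  then obtain a where "p0 = [:a:]" by (rule degree_eq_zeroE)
  thus False using P0 by simp
qed



lemma zeta_pow_self: "n \<ge> 1 \<Longrightarrow> zeta n ^ n = 1"
  unfolding zeta_def DeMoivre
proof -
  assume "n \<ge> 1"
  hence "real n * (2 * pi / real n) = 2 * pi" by simp
  thus "cis (real n * (2 * pi / real n)) = 1" by simp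
qed

lemma zeta_cnj_mult: "zeta n * cnj (zeta n) = 1"
  by (simp add: zeta_def cis_cnj cis_mult)

lemma zeta_nz: "zeta n \<noteq> 0"
  using zeta_cnj_mult[of n] by auto

lemma zeta_cnj: "n \<ge> 1 \<Longrightarrow> cnj (zeta n) = zeta n ^ (n - 1)"
proof -
  assume n: "n \<ge> 1"
  obtain m where m: "n = Suc m" using n by (cases n) auto
  have "zeta n ^ (n - 1) * zeta n = 1" using zeta_pow_self[OF n] by (simp add: m power_Suc2[symmetric])
  hence "zeta n ^ (n - 1) = 1 / zeta n" using zeta_nz by (simp add: field_simps)
  also have "\<dots> = cnj (zeta n)" using zeta_cnj_mult[of n] zeta_nz by (simp add: field_simps)
  finally show ?thesis by simp
qed

lemma zeta_sq: "k \<ge> 1 \<Longrightarrow> zeta (2 ^ k) ^ 2 = zeta (2 ^ (k - 1))"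
proof -
  assume k: "k \<ge> 1"
  obtain j where j: "k = Suc j" using k by (cases k) auto
  have e: "(2::nat) ^ k = 2 * 2 ^ (k - 1)" by (simp add: j)
  show ?thesis unfolding zeta_def DeMoivre by (simp add: e)
qed

lemma zeta_half_pow: "k \<ge> 1 \<Longrightarrow> zeta (2 ^ k) ^ (2 ^ (k - 1)) = -1"
proof -
  assume k: "k \<ge> 1"
  obtain j where j: "k = Suc j" using k by (cases k) auto
  have e: "(2::nat) ^ k = 2 * 2 ^ (k - 1)" by (simp add: j)
  have "zeta (2 ^ k) ^ (2 ^ (k - 1)) = cis pi" unfolding zeta_def DeMoivre by (simp add: e)
  thus ?thesis by simp
qed

lemma Z_zero: "0 \<in> Zhalf_zeta n"
proof -
  have "1 + - 1 \<in> Zhalf_zeta n" by (rule Zhalf_zeta.add[OF Zhalf_zeta.one Zhalf_zeta.neg[OF Zhalf_zeta.one]])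
  thus ?thesis by simp
qed

lemma Z_diff: "x \<in> Zhalf_zeta n \<Longrightarrow> y \<in> Zhalf_zeta n \<Longrightarrow> x - y \<in> Zhalf_zeta n"
  unfolding diff_conv_add_uminus by (rule Zhalf_zeta.add, assumption, rule Zhalf_zeta.neg)

lemma Z_pow: "x \<in> Zhalf_zeta n \<Longrightarrow> x ^ m \<in> Zhalf_zeta n"
proof (induction m)
  case 0 then show ?case using Zhalf_zeta.one by simp
next
  case (Suc m) then show ?case unfolding power_Suc by (intro Zhalf_zeta.mult)
qed

lemma Z_sum: "(\<And>i. i \<in> S \<Longrightarrow> f i \<in> Zhalf_zeta n) \<Longrightarrow> sum f S \<in> Zhalf_zeta n"
proof (induction S rule: infinite_finite_induct)
  case (infinite A) then show ?case using Z_zero by simp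
next
  case empty then show ?case using Z_zero by simp
next
  case (insert x F)
  have "f x \<in> Zhalf_zeta n" "sum f F \<in> Zhalf_zeta n" using insert.prems insert.IH by auto
  then have "f x + sum f F \<in> Zhalf_zeta n" by (rule Zhalf_zeta.add)
  then show ?case using insert.hyps by simp
qed

lemma Z_cnj: assumes "x \<in> Zhalf_zeta n" "n \<ge> 1" shows "cnj x \<in> Zhalf_zeta n"
  using assms proof (induction x rule: Zhalf_zeta.induct)
  case zeta then show ?case by (simp add: zeta_cnj Z_pow Zhalf_zeta.zeta)
qed (simp_all add: Zhalf_zeta.one Zhalf_zeta.half Zhalf_zeta.add Zhalf_zeta.neg Zhalf_zeta.mult)

lemma Z_repr: "x \<in> Zhalf_zeta n \<Longrightarrow> \<exists>P e. x = ev P (zeta n) / 2 ^ e"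
proof (induction x rule: Zhalf_zeta.induct)
  case one show ?case by (intro exI[of _ 1] exI[of _ 0]) simp
next
  case half show ?case by (intro exI[of _ 1] exI[of _ 1]) simp
next
  case zeta show ?case by (intro exI[of _ "[:0,1:]"] exI[of _ 0]) (simp add: ev_X)
next
  case (add x y)
  then obtain P e Q f where x: "x = ev P (zeta n) / 2 ^ e" and y: "y = ev Q (zeta n) / 2 ^ f" by blast
  have fr: "a / 2 ^ e + b / 2 ^ f = (2 ^ f * a + 2 ^ e * b) / 2 ^ (e + f)" for a b :: complex
    by (simp add: power_add add_frac_eq)
  have "x + y = ev (smult (2^f) P + smult (2^e) Q) (zeta n) / 2 ^ (e + f)"
    unfolding x y fr by simp
  thus ?case by blast
next
  case (neg x)
  then obtain P e where x: "x = ev P (zeta n) / 2 ^ e" by blast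
  show ?case by (intro exI[of _ "- P"] exI[of _ e]) (simp add: x)
next
  case (mult x y)
  then obtain P e Q f where x: "x = ev P (zeta n) / 2 ^ e" and y: "y = ev Q (zeta n) / 2 ^ f" by blast
  have "x * y = ev (P * Q) (zeta n) / 2 ^ (e + f)"
    unfolding x y ev_mult power_add by (rule times_divide_times_eq)
  thus ?case by blast
qed

lemma reduce_poly:
  fixes P :: "int poly" and w :: complex
  assumes N: "N \<ge> 1" and w: "w ^ N = -1"
  shows "\<exists>R. degree R < N \<and> ev R w = ev P w"
proof -
  define f :: "int poly" where "f = monom 1 N + 1"
  have df: "degree f = N" unfolding f_def using N
    by (subst degree_add_eq_left) (auto simp: degree_monom_eq)
  have lf: "lead_coeff f = 1" using df N by (simp add: f_def)
  have f0: "f \<noteq> 0" using lf by auto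
  obtain q r where qr: "pseudo_divmod P f = (q, r)" by (cases "pseudo_divmod P f")
  have eq: "P = f * q + r" using pseudo_divmod(1)[OF f0 qr] lf by simp
  have rd: "r = 0 \<or> degree r < N" using pseudo_divmod(2)[OF f0 qr] df by simp
  have "ev f w = 0" using w by (simp add: f_def ev_monom)
  hence "ev P w = ev r w" by (simp add: eq)
  moreover have "degree r < N" using rd N by auto
  ultimately show ?thesis by auto
qed



lemma K_z:
  fixes p :: "int poly"
  assumes k: "k \<ge> 1" and dp: "degree p < 2 ^ (k - 1)" and pz: "ev p (zeta (2 ^ k)) = 0"
  shows "p = 0"
proof -
  define z where "z = zeta (2 ^ k)"
  define g :: "int poly" where "g = [:1,1:] ^ (2 ^ (k - 1)) + 1"
  have ev11: "ev [:1,1:] y = 1 + y" for y by (simp add: ev_pCons)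
  have "ev g (z - 1) = z ^ (2 ^ (k - 1)) + 1" by (simp add: g_def ev11)
  also have "\<dots> = 0" using zeta_half_pow[OF k] by (simp add: z_def)
  finally have root: "ev g (z - 1) = 0" .
  define p' where "p' = p \<circ>\<^sub>p [:1,1:]"
  have dp': "degree p' < 2 ^ (k - 1)" using dp by (simp add: p'_def degree_pcompose)
  have "ev p' (z - 1) = ev p z" by (simp add: p'_def ev11)
  hence "ev p' (z - 1) = 0" using pz by (simp add: z_def)
  hence "p' = 0" using K_eta[of "k - 1" "z - 1" p'] root dp' unfolding g_def by blast
  thus "p = 0" unfolding p'_def by (rule pcompose_eq_0) simp
qed

lemma uniq0:
  assumes k: "k \<ge> 2"
    and a: "a \<in> Zhalf_zeta (2 ^ (k - 1))" and b: "b \<in> Zhalf_zeta (2 ^ (k - 1))"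
    and ab: "a + zeta (2 ^ k) * b = 0"
  shows "a = 0 \<and> b = 0"
proof -
  define z where "z = zeta (2 ^ k)"
  define w where "w = zeta (2 ^ (k - 1))"
  define N :: nat where "N = 2 ^ (k - 2)"
  have N1: "N \<ge> 1" by (simp add: N_def)
  have k1: "k - 1 \<ge> 1" using k by simp
  obtain j where j: "k = Suc (Suc j)" using k by (metis add_2_eq_Suc le_Suc_ex)
  have wN: "w ^ N = -1" using zeta_half_pow[OF k1] by (simp add: w_def N_def j)
  have zz: "z * z = w" using zeta_sq[of k] k by (simp add: z_def w_def power2_eq_square)
  have MN: "(2::nat) ^ (k - 1) = 2 * N"
  proof -
    show ?thesis by (simp add: j N_def)
  qed
  obtain P e where P: "a = ev P w / 2 ^ e" using Z_repr[OF a] w_def by blast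
  obtain Q f where Q: "b = ev Q w / 2 ^ f" using Z_repr[OF b] w_def by blast
  obtain R where R: "degree R < N" "ev R w = ev (smult (2^f) P) w" using reduce_poly[OF N1 wN] by blast
  obtain S where S: "degree S < N" "ev S w = ev (smult (2^e) Q) w" using reduce_poly[OF N1 wN] by blast
  have Ra: "ev R w = 2 ^ (e + f) * a" using R(2) by (simp add: P power_add)
  have Sb: "ev S w = 2 ^ (e + f) * b" using S(2) by (simp add: Q power_add)
  define X2 :: "int poly" where "X2 = [:0,0,1:]"
  define T where "T = R \<circ>\<^sub>p X2 + [:0,1:] * (S \<circ>\<^sub>p X2)"
  have evX2: "ev X2 y = y * y" for y by (simp add: X2_def ev_pCons)
  have evT: "ev T y = ev R (y * y) + y * ev S (y * y)" for y by (simp add: T_def evX2 ev_X ev_pCons)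
  have dX2: "degree X2 = 2" by (simp add: X2_def)
  have "degree T < 2 * N"
    unfolding T_def
  proof (rule degree_add_less)
    show "degree (R \<circ>\<^sub>p X2) < 2 * N" using R(1) by (simp add: degree_pcompose dX2)
    have "degree ([:0,1:] * (S \<circ>\<^sub>p X2)) \<le> degree ([:0,1::int:]) + degree (S \<circ>\<^sub>p X2)"
      by (rule degree_mult_le)
    also have "\<dots> = 1 + degree S * 2" by (simp add: degree_pcompose dX2)
    finally show "degree ([:0,1:] * (S \<circ>\<^sub>p X2)) < 2 * N" using S(1) by linarith
  qed
  moreover have "ev T z = 0"
  proof -
    have "ev T z = 2 ^ (e + f) * (a + z * b)" unfolding evT unfolding zz Ra Sb by (simp add: algebra_simps)
    thus ?thesis using ab by (simp add: z_def)
  qed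
  ultimately have T0: "T = 0" using K_z[of k T] k MN unfolding z_def by simp
  have "ev T (- z) = 0" by (simp add: T0)
  hence "ev R w - z * ev S w = 0" by (simp add: evT zz)
  moreover have "ev R w + z * ev S w = 0" using \<open>ev T z = 0\<close> by (simp add: evT zz)
  moreover have "2 * ev R w = (ev R w - z * ev S w) + (ev R w + z * ev S w)" by simp
  ultimately have "ev R w = 0" by simp
  hence a0: "a = 0" using Ra by simp
  moreover have "z \<noteq> 0" by (simp add: z_def zeta_nz)
  ultimately show ?thesis using ab by (simp add: z_def)
qed

lemma uniq:
  assumes k: "k \<ge> 2"
    and "a \<in> Zhalf_zeta (2 ^ (k - 1))" "b \<in> Zhalf_zeta (2 ^ (k - 1))"
    and "a' \<in> Zhalf_zeta (2 ^ (k - 1))" "b' \<in> Zhalf_zeta (2 ^ (k - 1))"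
    and eq: "a + zeta (2 ^ k) * b = a' + zeta (2 ^ k) * b'"
  shows "a = a' \<and> b = b'"
proof -
  have "(a - a') + zeta (2 ^ k) * (b - b') = 0" using eq by (simp add: algebra_simps)
  moreover have "a - a' \<in> Zhalf_zeta (2 ^ (k - 1))" "b - b' \<in> Zhalf_zeta (2 ^ (k - 1))"
    using assms by (simp_all add: Z_diff)
  ultimately show ?thesis using uniq0[OF k] by fastforce
qed

lemma exist:
  assumes k: "k \<ge> 1" and x: "x \<in> Zhalf_zeta (2 ^ k)"
  shows "\<exists>a b. a \<in> Zhalf_zeta (2 ^ (k - 1)) \<and> b \<in> Zhalf_zeta (2 ^ (k - 1)) \<and> x = a + zeta (2 ^ k) * b"
  using x
proof (induction x rule: Zhalf_zeta.induct)
  case one show ?case using Zhalf_zeta.one Z_zero by fastforce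
next
  case half show ?case using Zhalf_zeta.half Z_zero by fastforce
next
  case zeta show ?case using Zhalf_zeta.one Z_zero by fastforce
next
  case (add x y)
  then obtain a b c d where "a \<in> Zhalf_zeta (2 ^ (k - 1))" "b \<in> Zhalf_zeta (2 ^ (k - 1))" "x = a + zeta (2 ^ k) * b"
    "c \<in> Zhalf_zeta (2 ^ (k - 1))" "d \<in> Zhalf_zeta (2 ^ (k - 1))" "y = c + zeta (2 ^ k) * d" by blast
  then show ?case
    by (intro exI[of _ "a + c"] exI[of _ "b + d"]) (simp add: Zhalf_zeta.add algebra_simps)
next
  case (neg x)
  then obtain a b where "a \<in> Zhalf_zeta (2 ^ (k - 1))" "b \<in> Zhalf_zeta (2 ^ (k - 1))" "x = a + zeta (2 ^ k) * b" by blast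
  then show ?case
    by (intro exI[of _ "- a"] exI[of _ "- b"]) (simp add: Zhalf_zeta.neg algebra_simps)
next
  case (mult x y)
  then obtain a b c d where h: "a \<in> Zhalf_zeta (2 ^ (k - 1))" "b \<in> Zhalf_zeta (2 ^ (k - 1))" "x = a + zeta (2 ^ k) * b"
    "c \<in> Zhalf_zeta (2 ^ (k - 1))" "d \<in> Zhalf_zeta (2 ^ (k - 1))" "y = c + zeta (2 ^ k) * d" by blast
  have zz: "zeta (2 ^ k) * zeta (2 ^ k) = zeta (2 ^ (k - 1))" using zeta_sq[OF k] by (simp add: power2_eq_square)
  have "x * y = (a * c + (zeta (2 ^ k) * zeta (2 ^ k)) * (b * d)) + zeta (2 ^ k) * (a * d + b * c)"
    by (simp add: h(3,6) algebra_simps)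
  hence "x * y = (a * c + zeta (2 ^ (k - 1)) * (b * d)) + zeta (2 ^ k) * (a * d + b * c)"
    by (simp only: zz)
  moreover have "a * c + zeta (2 ^ (k - 1)) * (b * d) \<in> Zhalf_zeta (2 ^ (k - 1))"
    using h by (intro Zhalf_zeta.add Zhalf_zeta.mult Zhalf_zeta.zeta)
  moreover have "a * d + b * c \<in> Zhalf_zeta (2 ^ (k - 1))"
    using h by (intro Zhalf_zeta.add Zhalf_zeta.mult)
  ultimately show ?case by blast
qed



lemma sum_split2:
  fixes f :: "nat \<Rightarrow> 'a :: comm_monoid_add" and d :: nat
  shows "(\<Sum>q\<in>{0..<d*2}. f q) = (\<Sum>j<d. f (2*j) + f (2*j+1))"
proof (induction d)
  case 0 then show ?case by simp
next
  case (Suc d)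
  have "{0..<Suc d * 2} = {0..<d*2} \<union> {d*2, d*2+1}" by auto
  hence "(\<Sum>q\<in>{0..<Suc d * 2}. f q) = (\<Sum>q\<in>{0..<d*2}. f q) + f (d*2) + f (d*2+1)"
    by (simp add: sum.union_disjoint add_ac)
  then show ?case using Suc by (simp add: mult.commute add_ac)
qed

lemma mult_adj_entry:
  assumes "A \<in> carrier_mat n m" "i < n" "i' < n"
  shows "(A * adjoint A) $$ (i, i') = (\<Sum>j\<in>{0..<m}. A $$ (i, j) * cnj (A $$ (i', j)))"
  using assms by (simp add: adjoint_def scalar_prod_def)

lemma mult_vec_entry:
  assumes "A \<in> carrier_mat n m" "i < n" "dim_vec v = m"
  shows "(A *\<^sub>v v) $ i = (\<Sum>j\<in>{0..<m}. A $$ (i, j) * v $ j)"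
  using assms by (simp add: scalar_prod_def)

lemma Lambda_carrier: "Lambda k \<in> carrier_mat 2 2"
  unfolding Lambda_def mat_of_rows_list_def carrier_mat_def by (simp add: numeral_2_eq_2)

lemma Lambda_entries:
  "Lambda k $$ (0,0) = 0" "Lambda k $$ (0,1) = 1" "Lambda k $$ (1,0) = zeta (2 ^ (k - 1))" "Lambda k $$ (1,1) = 0"
  by (simp_all add: Lambda_def mat_of_rows_list_def)

lemma Lambda_entries':
  "Lambda k $$ (0,Suc 0) = 1" "Lambda k $$ (Suc 0,0) = zeta (2 ^ (k - 1))" "Lambda k $$ (Suc 0,Suc 0) = 0"
  by (simp_all add: Lambda_def mat_of_rows_list_def)

definition Phi :: "nat \<Rightarrow> complex mat \<Rightarrow> complex mat \<Rightarrow> complex mat" where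
  "Phi k A B = kron_mat A (1\<^sub>m 2) + kron_mat B (Lambda k)"

lemma Phi_carrier: "A \<in> carrier_mat d d \<Longrightarrow> B \<in> carrier_mat d d \<Longrightarrow> Phi k A B \<in> carrier_mat (d*2) (d*2)"
  using Lambda_carrier[of k] by (simp add: Phi_def kron_mat_def)

lemma Phi_entry:
  assumes "A \<in> carrier_mat d d" "B \<in> carrier_mat d d" "p < d*2" "q < d*2"
  shows "Phi k A B $$ (p, q) = A $$ (p div 2, q div 2) * 1\<^sub>m 2 $$ (p mod 2, q mod 2)
           + B $$ (p div 2, q div 2) * Lambda k $$ (p mod 2, q mod 2)"
  using assms Lambda_carrier[of k] by (simp add: Phi_def kron_mat_def)

lemma Phi_entries:
  assumes "A \<in> carrier_mat d d" "B \<in> carrier_mat d d" "i < d" "j < d"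
  shows "Phi k A B $$ (2*i, 2*j) = A $$ (i, j)"
    "Phi k A B $$ (2*i, 2*j+1) = B $$ (i, j)"
    "Phi k A B $$ (2*i+1, 2*j) = B $$ (i, j) * zeta (2 ^ (k - 1))"
    "Phi k A B $$ (2*i+1, 2*j+1) = A $$ (i, j)"
  using assms by (simp_all add: Phi_entry Lambda_entries Lambda_entries')



lemma entryU:
  assumes "A \<in> carrier_mat d d" "B \<in> carrier_mat d d" "U = A + z \<cdot>\<^sub>m B" "i < d" "j < d"
  shows "U $$ (i, j) = A $$ (i, j) + z * B $$ (i, j)"
  using assms by simp

lemma key_sums:
  assumes k: "k \<ge> 2"
    and A: "A \<in> carrier_mat d d" and B: "B \<in> carrier_mat d d"
    and eA: "entries_in (Zhalf_zeta (2 ^ (k - 1))) A" and eB: "entries_in (Zhalf_zeta (2 ^ (k - 1))) B"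
    and U: "U = A + zeta (2 ^ k) \<cdot>\<^sub>m B" and UU: "U * adjoint U = 1\<^sub>m d"
    and i: "i < d" and i': "i' < d"
  shows "(\<Sum>j<d. A $$ (i,j) * cnj (A $$ (i',j)) + B $$ (i,j) * cnj (B $$ (i',j))) = (if i = i' then 1 else 0)"
    and "(\<Sum>j<d. A $$ (i,j) * cnj (B $$ (i',j)) * cnj (zeta (2 ^ (k - 1))) + B $$ (i,j) * cnj (A $$ (i',j))) = 0"
proof -
  define z where "z = zeta (2 ^ k)"
  define w where "w = zeta (2 ^ (k - 1))"
  define R where "R = Zhalf_zeta (2 ^ (k - 1))"
  have k1: "k \<ge> 1" using k by simp
  have zz: "z * z = w" using zeta_sq[OF k1] by (simp add: z_def w_def power2_eq_square)
  have zc: "z * cnj z = 1" by (simp add: z_def zeta_cnj_mult)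
  have cz: "cnj z = z * cnj w"
  proof -
    have "z * cnj w = z * (cnj z * cnj z)" using zz by (metis complex_cnj_mult)
    also have "\<dots> = (z * cnj z) * cnj z" by (simp add: algebra_simps)
    finally show ?thesis using zc by simp
  qed
  have Uc: "U \<in> carrier_mat d d" using U A B by simp
  have Ue: "U $$ (i, j) = A $$ (i, j) + z * B $$ (i, j)" if "i < d" "j < d" for i j
    using entryU[OF A B U that] by (simp add: z_def)
  define S1 where "S1 = (\<Sum>j<d. A $$ (i,j) * cnj (A $$ (i',j)) + B $$ (i,j) * cnj (B $$ (i',j)))"
  define S2 where "S2 = (\<Sum>j<d. A $$ (i,j) * cnj (B $$ (i',j)) * cnj w + B $$ (i,j) * cnj (A $$ (i',j)))"
  have "(if i = i' then 1 else 0) = (U * adjoint U) $$ (i, i')" using UU i i' by simp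
  also have "\<dots> = (\<Sum>j<d. U $$ (i, j) * cnj (U $$ (i', j)))"
    using mult_adj_entry[OF Uc i i'] by (simp add: atLeast0LessThan)
  also have "\<dots> = (\<Sum>j<d. (A $$ (i,j) * cnj (A $$ (i',j)) + B $$ (i,j) * cnj (B $$ (i',j)))
      + z * (A $$ (i,j) * cnj (B $$ (i',j)) * cnj w + B $$ (i,j) * cnj (A $$ (i',j))))"
  proof (rule sum.cong[OF refl])
    fix j assume "j \<in> {..<d}"
    hence j: "j < d" by simp
    have "U $$ (i, j) * cnj (U $$ (i', j)) = (A $$ (i, j) + z * B $$ (i, j)) * (cnj (A $$ (i', j)) + cnj z * cnj (B $$ (i', j)))"
      using Ue[OF i j] Ue[OF i' j] by simp
    also have "\<dots> = A $$ (i,j) * cnj (A $$ (i',j)) + (z * cnj z) * (B $$ (i,j) * cnj (B $$ (i',j)))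
        + cnj z * (A $$ (i,j) * cnj (B $$ (i',j))) + z * (B $$ (i,j) * cnj (A $$ (i',j)))"
      by (simp add: algebra_simps)
    also have "\<dots> = (A $$ (i,j) * cnj (A $$ (i',j)) + B $$ (i,j) * cnj (B $$ (i',j)))
      + z * (A $$ (i,j) * cnj (B $$ (i',j)) * cnj w + B $$ (i,j) * cnj (A $$ (i',j)))"
      unfolding zc unfolding cz by (simp add: algebra_simps)
    finally show "U $$ (i, j) * cnj (U $$ (i', j)) = (A $$ (i,j) * cnj (A $$ (i',j)) + B $$ (i,j) * cnj (B $$ (i',j)))
      + z * (A $$ (i,j) * cnj (B $$ (i',j)) * cnj w + B $$ (i,j) * cnj (A $$ (i',j)))" .
  qed
  also have "\<dots> = S1 + z * S2" unfolding S1_def S2_def sum_distrib_left by (simp add: sum.distrib)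
  finally have eq: "S1 + zeta (2 ^ k) * S2 = (if i = i' then 1 else 0) + zeta (2 ^ k) * 0"
    by (simp add: z_def)
  have n1: "(2::nat) ^ (k - 1) \<ge> 1" by simp
  have inA: "A $$ (a, b) \<in> R" "cnj (A $$ (a, b)) \<in> R" if "a < d" "b < d" for a b
    using eA that A Z_cnj[OF _ n1] by (auto simp: entries_in_def R_def)
  have inB: "B $$ (a, b) \<in> R" "cnj (B $$ (a, b)) \<in> R" if "a < d" "b < d" for a b
    using eB that B Z_cnj[OF _ n1] by (auto simp: entries_in_def R_def)
  have wR: "cnj w \<in> R" unfolding R_def w_def by (rule Z_cnj[OF Zhalf_zeta.zeta n1])
  have S1R: "S1 \<in> R" unfolding S1_def R_def
    by (rule Z_sum) (use inA inB i i' in \<open>auto simp: R_def intro!: Zhalf_zeta.add Zhalf_zeta.mult\<close>)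
  have S2R: "S2 \<in> R" unfolding S2_def R_def
    by (rule Z_sum) (use inA inB i i' wR in \<open>auto simp: R_def intro!: Zhalf_zeta.add Zhalf_zeta.mult\<close>)
  have dR: "(if i = i' then 1 else 0) \<in> R" by (simp add: R_def Zhalf_zeta.one Z_zero)
  have "S1 = (if i = i' then 1 else 0) \<and> S2 = 0"
    using uniq[OF k _ _ _ _ eq] S1R S2R dR Z_zero unfolding R_def by blast
  thus "(\<Sum>j<d. A $$ (i,j) * cnj (A $$ (i',j)) + B $$ (i,j) * cnj (B $$ (i',j))) = (if i = i' then 1 else 0)"
    and "(\<Sum>j<d. A $$ (i,j) * cnj (B $$ (i',j)) * cnj (zeta (2 ^ (k - 1))) + B $$ (i,j) * cnj (A $$ (i',j))) = 0"
    by (simp_all add: S1_def S2_def w_def)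
qed



lemma Phi_entries':
  assumes "A \<in> carrier_mat d d" "B \<in> carrier_mat d d" "i < d" "j < d"
  shows "Phi k A B $$ (2*i, Suc (2*j)) = B $$ (i, j)"
    "Phi k A B $$ (Suc (2*i), 2*j) = B $$ (i, j) * zeta (2 ^ (k - 1))"
    "Phi k A B $$ (Suc (2*i), Suc (2*j)) = A $$ (i, j)"
  using Phi_entries[OF assms, of k] by simp_all

lemma Phi_unitary:
  assumes k: "k \<ge> 2"
    and A: "A \<in> carrier_mat d d" and B: "B \<in> carrier_mat d d"
    and eA: "entries_in (Zhalf_zeta (2 ^ (k - 1))) A" and eB: "entries_in (Zhalf_zeta (2 ^ (k - 1))) B"
    and U: "U = A + zeta (2 ^ k) \<cdot>\<^sub>m B" and UU: "U * adjoint U = 1\<^sub>m d"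
  shows "Phi k A B * adjoint (Phi k A B) = 1\<^sub>m (d * 2)"
proof -
  define w where "w = zeta (2 ^ (k - 1))"
  define F where "F = Phi k A B"
  have Fc: "F \<in> carrier_mat (d*2) (d*2)" unfolding F_def by (rule Phi_carrier[OF A B])
  have wc: "w * cnj w = 1" by (simp add: w_def zeta_cnj_mult)
  note KS1 = key_sums(1)[OF k A B eA eB U UU]
  note KS2 = key_sums(2)[OF k A B eA eB U UU, folded w_def]
  note PE = Phi_entries[OF A B, of _ _ k, folded F_def w_def] Phi_entries'[OF A B, of _ _ k, folded F_def w_def]
  have C: "(\<Sum>j<d. F $$ (2*i+a, 2*j) * cnj (F $$ (2*i'+a', 2*j)) + F $$ (2*i+a, 2*j+1) * cnj (F $$ (2*i'+a', 2*j+1)))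
      = (if i = i' \<and> a = a' then 1 else 0)"
    if i: "i < d" and i': "i' < d" and a: "a < 2" and a': "a' < 2" for i i' a a'
  proof -
    consider "a = 0" "a' = 0" | "a = 0" "a' = 1" | "a = 1" "a' = 0" | "a = 1" "a' = 1" using a a' by linarith
    then show ?thesis
    proof cases
      case 1
      have "(\<Sum>j<d. F $$ (2*i+a, 2*j) * cnj (F $$ (2*i'+a', 2*j)) + F $$ (2*i+a, 2*j+1) * cnj (F $$ (2*i'+a', 2*j+1)))
         = (\<Sum>j<d. A $$ (i,j) * cnj (A $$ (i',j)) + B $$ (i,j) * cnj (B $$ (i',j)))"
        by (rule sum.cong[OF refl]) (use i i' 1 in \<open>simp add: PE\<close>)
      then show ?thesis using KS1[OF i i'] 1 by simp
    next
      case 2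
      have "(\<Sum>j<d. F $$ (2*i+a, 2*j) * cnj (F $$ (2*i'+a', 2*j)) + F $$ (2*i+a, 2*j+1) * cnj (F $$ (2*i'+a', 2*j+1)))
         = (\<Sum>j<d. A $$ (i,j) * cnj (B $$ (i',j)) * cnj w + B $$ (i,j) * cnj (A $$ (i',j)))"
        by (rule sum.cong[OF refl]) (use i i' 2 in \<open>simp add: PE\<close>)
      then show ?thesis using KS2[OF i i'] 2 by simp
    next
      case 3
      have "(\<Sum>j<d. F $$ (2*i+a, 2*j) * cnj (F $$ (2*i'+a', 2*j)) + F $$ (2*i+a, 2*j+1) * cnj (F $$ (2*i'+a', 2*j+1)))
         = cnj (\<Sum>j<d. A $$ (i',j) * cnj (B $$ (i,j)) * cnj w + B $$ (i',j) * cnj (A $$ (i,j)))"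
        unfolding cnj_sum
        by (rule sum.cong[OF refl]) (use i i' 3 in \<open>simp add: PE, (simp add: algebra_simps)?\<close>)
      then show ?thesis using KS2[OF i' i] 3 by simp
    next
      case 4
      have "(\<Sum>j<d. F $$ (2*i+a, 2*j) * cnj (F $$ (2*i'+a', 2*j)) + F $$ (2*i+a, 2*j+1) * cnj (F $$ (2*i'+a', 2*j+1)))
         = (\<Sum>j<d. A $$ (i,j) * cnj (A $$ (i',j)) + B $$ (i,j) * cnj (B $$ (i',j)))"
      proof (rule sum.cong[OF refl])
        fix j assume "j \<in> {..<d}"
        hence j: "j < d" by simp
        have "F $$ (2*i+a, 2*j) * cnj (F $$ (2*i'+a', 2*j)) = (w * cnj w) * (B $$ (i,j) * cnj (B $$ (i',j)))"
          using i i' j 4 by (simp add: PE, (simp add: algebra_simps)?)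
        moreover have "F $$ (2*i+a, 2*j+1) * cnj (F $$ (2*i'+a', 2*j+1)) = A $$ (i,j) * cnj (A $$ (i',j))"
          using i i' j 4 by (simp add: PE)
        ultimately show "F $$ (2*i+a, 2*j) * cnj (F $$ (2*i'+a', 2*j)) + F $$ (2*i+a, 2*j+1) * cnj (F $$ (2*i'+a', 2*j+1))
          = A $$ (i,j) * cnj (A $$ (i',j)) + B $$ (i,j) * cnj (B $$ (i',j))" using wc by simp
      qed
      then show ?thesis using KS1[OF i i'] 4 by simp
    qed
  qed
  have "F * adjoint F = 1\<^sub>m (d * 2)"
  proof (rule eq_matI)
    fix p p' assume p: "p < dim_row (1\<^sub>m (d * 2))" and p': "p' < dim_col (1\<^sub>m (d * 2))"
    hence pd: "p < d * 2" "p' < d * 2" by auto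
    define i a i' a' where "i = p div 2" "a = p mod 2" "i' = p' div 2" "a' = p' mod 2"
    have pe: "p = 2 * i + a" "p' = 2 * i' + a'" by (simp_all add: i_a_i'_a'_def)
    have ib: "i < d" "i' < d" "a < 2" "a' < 2" using pd by (auto simp: i_a_i'_a'_def)
    have "(F * adjoint F) $$ (p, p') = (\<Sum>q\<in>{0..<d*2}. F $$ (p, q) * cnj (F $$ (p', q)))"
      by (rule mult_adj_entry[OF Fc pd])
    also have "\<dots> = (\<Sum>j<d. F $$ (p, 2*j) * cnj (F $$ (p', 2*j)) + F $$ (p, 2*j+1) * cnj (F $$ (p', 2*j+1)))"
      by (rule sum_split2)
    also have "\<dots> = (if i = i' \<and> a = a' then 1 else 0)" unfolding pe by (rule C[OF ib])
    also have "\<dots> = 1\<^sub>m (d * 2) $$ (p, p')"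
    proof -
      have "(i = i' \<and> a = a') = (p = p')"
      proof
        assume "i = i' \<and> a = a'" thus "p = p'" using pe by simp
      next
        assume "p = p'" thus "i = i' \<and> a = a'" by (simp add: i_a_i'_a'_def)
      qed
      thus ?thesis using pd by simp
    qed
    finally show "(F * adjoint F) $$ (p, p') = 1\<^sub>m (d * 2) $$ (p, p')" .
  qed (use Fc in \<open>auto simp: adjoint_def\<close>)
  thus ?thesis by (simp add: F_def)
qed

lemma Phi_entries_in:
  assumes A: "A \<in> carrier_mat d d" and B: "B \<in> carrier_mat d d"
    and eA: "entries_in (Zhalf_zeta (2 ^ (k - 1))) A" and eB: "entries_in (Zhalf_zeta (2 ^ (k - 1))) B"
  shows "entries_in (Zhalf_zeta (2 ^ (k - 1))) (Phi k A B)"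
  unfolding entries_in_def
proof (intro allI impI)
  fix p q assume "p < dim_row (Phi k A B)" "q < dim_col (Phi k A B)"
  hence pq: "p < d * 2" "q < d * 2" using Phi_carrier[OF A B, of k] by auto
  have idx: "p div 2 < d" "q div 2 < d" using pq by auto
  have a: "A $$ (p div 2, q div 2) \<in> Zhalf_zeta (2 ^ (k - 1))" using eA A idx by (auto simp: entries_in_def)
  have b: "B $$ (p div 2, q div 2) \<in> Zhalf_zeta (2 ^ (k - 1))" using eB B idx by (auto simp: entries_in_def)
  have o: "1\<^sub>m 2 $$ (p mod 2, q mod 2) \<in> Zhalf_zeta (2 ^ (k - 1))"
    by (simp add: Zhalf_zeta.one Z_zero)
  have l: "Lambda k $$ (p mod 2, q mod 2) \<in> Zhalf_zeta (2 ^ (k - 1))"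
  proof -
    have "p mod 2 = 0 \<or> p mod 2 = 1" "q mod 2 = 0 \<or> q mod 2 = 1" by auto
    thus ?thesis using Lambda_entries[of k] Z_zero Zhalf_zeta.one Zhalf_zeta.zeta by auto
  qed
  show "Phi k A B $$ (p, q) \<in> Zhalf_zeta (2 ^ (k - 1))"
    unfolding Phi_entry[OF A B pq] by (intro Zhalf_zeta.add Zhalf_zeta.mult a b o l)
qed

lemma Phi_catalytic:
  assumes k: "k \<ge> 2"
    and A: "A \<in> carrier_mat d d" and B: "B \<in> carrier_mat d d"
    and U: "U = A + zeta (2 ^ k) \<cdot>\<^sub>m B" and u: "u \<in> carrier_vec d"
  shows "Phi k A B *\<^sub>v kron_vec u (lambda_state k) = kron_vec (U *\<^sub>v u) (lambda_state k)"
proof -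
  define z where "z = zeta (2 ^ k)"
  define l0 where "l0 = 1 / complex_of_real (sqrt 2)"
  have k1: "k \<ge> 1" using k by simp
  have zz: "z * z = zeta (2 ^ (k - 1))" using zeta_sq[OF k1] by (simp add: z_def power2_eq_square)
  have ld: "dim_vec (lambda_state k) = 2" by (simp add: lambda_state_def)
  have l0e: "lambda_state k $ 0 = l0" by (simp add: lambda_state_def l0_def)
  have l1e: "lambda_state k $ Suc 0 = z * l0" by (simp add: lambda_state_def l0_def z_def)
  define F where "F = Phi k A B"
  have Fc: "F \<in> carrier_mat (d*2) (d*2)" unfolding F_def by (rule Phi_carrier[OF A B])
  note PE = Phi_entries[OF A B, of _ _ k, folded F_def zz] Phi_entries'[OF A B, of _ _ k, folded F_def zz]
  have Uc: "U \<in> carrier_mat d d" using U A B by simp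
  have ud: "dim_vec u = d" using u by simp
  have kd: "dim_vec (kron_vec u (lambda_state k)) = d * 2" by (simp add: kron_vec_def ld ud)
  have ke: "kron_vec v (lambda_state k) $ q = v $ (q div 2) * lambda_state k $ (q mod 2)"
    if "q < dim_vec v * 2" for v q using that by (simp add: kron_vec_def ld)
  have Ue: "U $$ (i, j) = A $$ (i, j) + z * B $$ (i, j)" if "i < d" "j < d" for i j
    using entryU[OF A B U that] by (simp add: z_def)
  show ?thesis
  proof (rule eq_vecI)
    show "dim_vec (Phi k A B *\<^sub>v kron_vec u (lambda_state k)) = dim_vec (kron_vec (U *\<^sub>v u) (lambda_state k))"
      using Fc Uc by (simp add: F_def[symmetric] kron_vec_def ld)
    fix p assume "p < dim_vec (kron_vec (U *\<^sub>v u) (lambda_state k))"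
    hence pd: "p < d * 2" using Uc by (simp add: kron_vec_def ld)
    define i a where "i = p div 2" "a = p mod 2"
    have pe: "p = 2 * i + a" by (simp add: i_a_def)
    have ib: "i < d" "a < 2" using pd by (auto simp: i_a_def)
    have Uu: "(U *\<^sub>v u) $ i = (\<Sum>j<d. (A $$ (i, j) + z * B $$ (i, j)) * u $ j)"
      using mult_vec_entry[OF Uc ib(1) ud] Ue ib(1) by (simp add: atLeast0LessThan)
    have rhs: "kron_vec (U *\<^sub>v u) (lambda_state k) $ p = (U *\<^sub>v u) $ i * lambda_state k $ a"
      using ke[of p "U *\<^sub>v u"] pd Uc by (simp add: i_a_def)
    have "(F *\<^sub>v kron_vec u (lambda_state k)) $ p = (\<Sum>q\<in>{0..<d*2}. F $$ (p, q) * kron_vec u (lambda_state k) $ q)"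
      by (rule mult_vec_entry[OF Fc pd kd])
    also have "\<dots> = (\<Sum>j<d. F $$ (p, 2*j) * kron_vec u (lambda_state k) $ (2*j) + F $$ (p, 2*j+1) * kron_vec u (lambda_state k) $ (2*j+1))"
      by (rule sum_split2)
    also have "\<dots> = (\<Sum>j<d. F $$ (p, 2*j) * (u $ j * l0) + F $$ (p, 2*j+1) * (u $ j * (z * l0)))"
    proof (rule sum.cong[OF refl])
      fix j assume "j \<in> {..<d}"
      hence "2 * j < dim_vec u * 2" "2 * j + 1 < dim_vec u * 2" by (auto simp: ud)
      thus "F $$ (p, 2*j) * kron_vec u (lambda_state k) $ (2*j) + F $$ (p, 2*j+1) * kron_vec u (lambda_state k) $ (2*j+1)
         = F $$ (p, 2*j) * (u $ j * l0) + F $$ (p, 2*j+1) * (u $ j * (z * l0))"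
        using ke[of "2*j" u] ke[of "2*j+1" u] by (simp add: l0e l1e)
    qed
    also have "\<dots> = (U *\<^sub>v u) $ i * lambda_state k $ a"
    proof -
      consider "a = 0" | "a = 1" using ib by linarith
      then show ?thesis
      proof cases
        case 1
        have "(\<Sum>j<d. F $$ (p, 2*j) * (u $ j * l0) + F $$ (p, 2*j+1) * (u $ j * (z * l0)))
            = (\<Sum>j<d. (A $$ (i, j) + z * B $$ (i, j)) * u $ j) * l0"
          unfolding sum_distrib_right
          by (rule sum.cong[OF refl]) (use ib 1 pe in \<open>simp add: PE, (simp add: algebra_simps)?\<close>)
        then show ?thesis using Uu 1 l0e by simp
      next
        case 2
        have "(\<Sum>j<d. F $$ (p, 2*j) * (u $ j * l0) + F $$ (p, 2*j+1) * (u $ j * (z * l0)))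
            = (\<Sum>j<d. (A $$ (i, j) + z * B $$ (i, j)) * u $ j) * (z * l0)"
          unfolding sum_distrib_right
          by (rule sum.cong[OF refl]) (use ib 2 pe in \<open>simp add: PE, (simp add: algebra_simps)?\<close>)
        then show ?thesis using Uu 2 l1e by simp
      qed
    qed
    finally show "(Phi k A B *\<^sub>v kron_vec u (lambda_state k)) $ p = kron_vec (U *\<^sub>v u) (lambda_state k) $ p"
      using rhs by (simp add: F_def)
  qed
qed



lemma decomp_exists:
  assumes k: "k \<ge> 2" and e: "\<forall>i < dim_row U. \<forall>j < dim_col U. U $$ (i, j) \<in> Zhalf_zeta (2 ^ k)"
  shows "\<exists>AB. is_decomp k U AB"
proof -
  define R where "R = Zhalf_zeta (2 ^ (k - 1))"
  define z where "z = zeta (2 ^ k)"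
  define P where "P = (\<lambda>i j (ab :: complex \<times> complex). fst ab \<in> R \<and> snd ab \<in> R \<and> U $$ (i, j) = fst ab + z * snd ab)"
  define C where "C = (\<lambda>i j. SOME ab. P i j ab)"
  have k1: "k \<ge> 1" using k by simp
  have PC: "P i j (C i j)" if "i < dim_row U" "j < dim_col U" for i j
  proof -
    have "U $$ (i, j) \<in> Zhalf_zeta (2 ^ k)" using e that by blast
    from exist[OF k1 this] obtain a b where "a \<in> R" "b \<in> R" "U $$ (i, j) = a + z * b"
      unfolding R_def z_def by blast
    hence "P i j (a, b)" by (simp add: P_def)
    thus ?thesis unfolding C_def by (rule someI)
  qed
  define A where "A = mat (dim_row U) (dim_col U) (\<lambda>(i, j). fst (C i j))"
  define B where "B = mat (dim_row U) (dim_col U) (\<lambda>(i, j). snd (C i j))"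
  have "is_decomp k U (A, B)"
    unfolding is_decomp_def
  proof (intro conjI)
    show "fst (A, B) \<in> carrier_mat (dim_row U) (dim_col U)" "snd (A, B) \<in> carrier_mat (dim_row U) (dim_col U)"
      by (simp_all add: A_def B_def)
    show "entries_in (Zhalf_zeta (2 ^ (k - 1))) (fst (A, B))"
      using PC by (auto simp: entries_in_def A_def P_def R_def)
    show "entries_in (Zhalf_zeta (2 ^ (k - 1))) (snd (A, B))"
      using PC by (auto simp: entries_in_def B_def P_def R_def)
    show "U = fst (A, B) + zeta (2 ^ k) \<cdot>\<^sub>m snd (A, B)"
      by (rule eq_matI) (use PC in \<open>auto simp: A_def B_def P_def z_def\<close>)
  qed
  thus ?thesis by blast
qed

lemma decomp_unique:
  assumes k: "k \<ge> 2" and d1: "is_decomp k U AB" and d2: "is_decomp k U AB'"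
  shows "AB = AB'"
proof -
  obtain A B A' B' where ab: "AB = (A, B)" "AB' = (A', B')" by (cases AB, cases AB')
  have D1: "A \<in> carrier_mat (dim_row U) (dim_col U)" "B \<in> carrier_mat (dim_row U) (dim_col U)"
    "entries_in (Zhalf_zeta (2 ^ (k - 1))) A" "entries_in (Zhalf_zeta (2 ^ (k - 1))) B"
    and E1: "U = A + zeta (2 ^ k) \<cdot>\<^sub>m B"
    using d1 unfolding is_decomp_def ab fst_conv snd_conv by blast+
  have D2: "A' \<in> carrier_mat (dim_row U) (dim_col U)" "B' \<in> carrier_mat (dim_row U) (dim_col U)"
    "entries_in (Zhalf_zeta (2 ^ (k - 1))) A'" "entries_in (Zhalf_zeta (2 ^ (k - 1))) B'"
    and E2: "U = A' + zeta (2 ^ k) \<cdot>\<^sub>m B'"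
    using d2 unfolding is_decomp_def ab fst_conv snd_conv by blast+
  have ent: "A $$ (i, j) = A' $$ (i, j) \<and> B $$ (i, j) = B' $$ (i, j)"
    if "i < dim_row U" "j < dim_col U" for i j
  proof (rule uniq[OF k])
    show "A $$ (i, j) \<in> Zhalf_zeta (2 ^ (k - 1))" "B $$ (i, j) \<in> Zhalf_zeta (2 ^ (k - 1))"
      "A' $$ (i, j) \<in> Zhalf_zeta (2 ^ (k - 1))" "B' $$ (i, j) \<in> Zhalf_zeta (2 ^ (k - 1))"
      using D1 D2 that by (auto simp: entries_in_def)
    have "U $$ (i, j) = (A + zeta (2 ^ k) \<cdot>\<^sub>m B) $$ (i, j)" using arg_cong[OF E1, of "\<lambda>M. M $$ (i, j)"] .
    also have "\<dots> = A $$ (i, j) + zeta (2 ^ k) * B $$ (i, j)" using D1 that by simp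
    finally have 1: "U $$ (i, j) = A $$ (i, j) + zeta (2 ^ k) * B $$ (i, j)" .
    have "U $$ (i, j) = (A' + zeta (2 ^ k) \<cdot>\<^sub>m B') $$ (i, j)" using arg_cong[OF E2, of "\<lambda>M. M $$ (i, j)"] .
    also have "\<dots> = A' $$ (i, j) + zeta (2 ^ k) * B' $$ (i, j)" using D2 that by simp
    finally have 2: "U $$ (i, j) = A' $$ (i, j) + zeta (2 ^ k) * B' $$ (i, j)" .
    from 1 2
    show "A $$ (i, j) + zeta (2 ^ k) * B $$ (i, j) = A' $$ (i, j) + zeta (2 ^ k) * B' $$ (i, j)" by simp
  qed
  have "A = A'" by (rule eq_matI) (use D1 D2 ent in auto)
  moreover have "B = B'" by (rule eq_matI) (use D1 D2 ent in auto)
  ultimately show ?thesis using ab by simp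
qed

lemma phi_eq:
  assumes k: "k \<ge> 2" and d: "is_decomp k U (A, B)"
  shows "phi k U = Phi k A B"
proof -
  have "(THE AB. is_decomp k U AB) = (A, B)"
    using d decomp_unique[OF k] by blast
  thus ?thesis by (simp add: phi_def Phi_def)
qed

theorem proposition1:
  fixes k :: nat
  assumes "k \<ge> 2"
  shows "(\<forall>U \<in> unitaries_over (Zhalf_zeta (2 ^ k)). \<exists>!AB. is_decomp k U AB)
    \<and> catalytic_embedding (unitaries_over (Zhalf_zeta (2 ^ k)))
         (unitaries_over (Zhalf_zeta (2 ^ (k - 1)))) 2 (phi k) (lambda_state k)"
proof
  have k: "k \<ge> 2" by fact
  show "\<forall>U \<in> unitaries_over (Zhalf_zeta (2 ^ k)). \<exists>!AB. is_decomp k U AB"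
  proof
    fix U assume "U \<in> unitaries_over (Zhalf_zeta (2 ^ k))"
    hence e: "\<forall>i < dim_row U. \<forall>j < dim_col U. U $$ (i, j) \<in> Zhalf_zeta (2 ^ k)"
      by (simp add: unitaries_over_def)
    obtain AB where AB: "is_decomp k U AB" using decomp_exists[OF k e] by blast
    show "\<exists>!AB. is_decomp k U AB"
    proof (rule ex1I)
      show "is_decomp k U AB" by (rule AB)
      fix AB' assume "is_decomp k U AB'"
      thus "AB' = AB" using decomp_unique[OF k _ AB] by simp
    qed
  qed
  show "catalytic_embedding (unitaries_over (Zhalf_zeta (2 ^ k)))
         (unitaries_over (Zhalf_zeta (2 ^ (k - 1)))) 2 (phi k) (lambda_state k)"
    unfolding catalytic_embedding_def
  proof (intro conjI)
    show "lambda_state k \<in> carrier_vec 2" unfolding lambda_state_def carrier_vec_def by simp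
    have sum2: "(\<Sum>i<(2::nat). g i) = g 0 + (g 1 :: real)" for g by (simp add: eval_nat_numeral)
    have n1: "cmod (zeta (2 ^ k)) = 1" unfolding zeta_def by (rule norm_cis)
    have l0: "lambda_state k $ 0 = 1 / complex_of_real (sqrt 2)" by (simp add: lambda_state_def)
    have l1: "lambda_state k $ 1 = zeta (2 ^ k) / complex_of_real (sqrt 2)" by (simp add: lambda_state_def)
    have s2: "(cmod (1 / complex_of_real (sqrt 2)))\<^sup>2 = 1 / 2"
      by (simp add: norm_divide power_divide)
    have s2': "(cmod (zeta (2 ^ k) / complex_of_real (sqrt 2)))\<^sup>2 = 1 / 2"
      by (simp add: norm_divide power_divide n1)
    show "(\<Sum>i<2. (cmod (lambda_state k $ i))\<^sup>2) = 1" unfolding sum2 l0 l1 s2 s2' by simp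
  next
   show "\<forall>U\<in>unitaries_over (Zhalf_zeta (2 ^ k)).
       phi k U \<in> unitaries_over (Zhalf_zeta (2 ^ (k - 1))) \<and>
       (\<forall>d. U \<in> carrier_mat d d \<longrightarrow>
            phi k U \<in> carrier_mat (d * 2) (d * 2) \<and>
            (\<forall>u\<in>carrier_vec d. phi k U *\<^sub>v kron_vec u (lambda_state k) = kron_vec (U *\<^sub>v u) (lambda_state k)))"
   proof
    fix U assume U: "U \<in> unitaries_over (Zhalf_zeta (2 ^ k))"
    hence uU: "unitary_mat U" and e: "\<forall>i < dim_row U. \<forall>j < dim_col U. U $$ (i, j) \<in> Zhalf_zeta (2 ^ k)"
      by (simp_all add: unitaries_over_def)
    define d where "d = dim_row U"
    have sq: "dim_col U = dim_row U" using uU unfolding unitary_mat_def square_mat.simps by blast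
    have Uc: "U \<in> carrier_mat d d" unfolding carrier_mat_def d_def using sq by blast
    have UU: "U * adjoint U = 1\<^sub>m d" using uU unfolding unitary_mat_def d_def by blast
    obtain AB where dAB: "is_decomp k U AB" using decomp_exists[OF k e] by blast
    obtain A B where AB: "AB = (A, B)" by (cases AB)
    have A0: "A \<in> carrier_mat (dim_row U) (dim_col U)" and B0: "B \<in> carrier_mat (dim_row U) (dim_col U)"
      and eA: "entries_in (Zhalf_zeta (2 ^ (k - 1))) A" and eB: "entries_in (Zhalf_zeta (2 ^ (k - 1))) B"
      and Ueq: "U = A + zeta (2 ^ k) \<cdot>\<^sub>m B"
      using dAB unfolding AB is_decomp_def fst_conv snd_conv by blast+
    have dc: "dim_col U = d" using Uc by auto
    have A: "A \<in> carrier_mat d d" and B: "B \<in> carrier_mat d d" using A0 B0 dc by (simp_all add: d_def)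
    have ph: "phi k U = Phi k A B" using phi_eq[OF k dAB[unfolded AB]] .
    have Fc: "Phi k A B \<in> carrier_mat (d*2) (d*2)" by (rule Phi_carrier[OF A B])
    have FF: "Phi k A B * adjoint (Phi k A B) = 1\<^sub>m (d * 2)" by (rule Phi_unitary[OF k A B eA eB Ueq UU])
    have Fd: "dim_row (Phi k A B) = d*2" "dim_col (Phi k A B) = d*2" using carrier_matD[OF Fc] by blast+
    have adjc: "adjoint (Phi k A B) \<in> carrier_mat (d*2) (d*2)" unfolding adjoint_def Fd by (rule mat_carrier)
    have FF': "adjoint (Phi k A B) * Phi k A B = 1\<^sub>m (d * 2)"
      by (rule mat_mult_left_right_inverse[OF Fc adjc FF])
    have eF: "entries_in (Zhalf_zeta (2 ^ (k - 1))) (Phi k A B)" by (rule Phi_entries_in[OF A B eA eB])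
    show "phi k U \<in> unitaries_over (Zhalf_zeta (2 ^ (k - 1))) \<and>
        (\<forall>d. U \<in> carrier_mat d d \<longrightarrow>
             phi k U \<in> carrier_mat (d * 2) (d * 2) \<and>
             (\<forall>u\<in>carrier_vec d. phi k U *\<^sub>v kron_vec u (lambda_state k) = kron_vec (U *\<^sub>v u) (lambda_state k)))"
    proof (intro conjI allI impI ballI)
      show "phi k U \<in> unitaries_over (Zhalf_zeta (2 ^ (k - 1)))"
        unfolding unitaries_over_def unitary_mat_def ph
        using Fc FF FF' eF by (auto simp: entries_in_def square_mat.simps)
    next
      fix d' assume "U \<in> carrier_mat d' d'"
      hence dd: "d' = d" using Uc by auto
      show "phi k U \<in> carrier_mat (d' * 2) (d' * 2)" using Fc ph dd by simp
    next
      fix d' :: nat and u :: "complex vec" assume "U \<in> carrier_mat d' d'" "u \<in> carrier_vec d'"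
      hence u: "u \<in> carrier_vec d" using Uc by auto
      show "phi k U *\<^sub>v kron_vec u (lambda_state k) = kron_vec (U *\<^sub>v u) (lambda_state k)"
        unfolding ph by (rule Phi_catalytic[OF k A B Ueq u])
    qed
   qed
  qed
qed

end
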